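(* Let $\mathcal{A}=(A,\le,\otimes,e,\to)$ be a strong algebra whose multiplication has a left residual $\Rightarrow_A$ (i.e. $a\otimes b\le c$ iff $b\le a\Rightarrow_A c$ for all $a,b,c$) and which internalizes its closed monoidal structure, i.e. for all $a,b,c\in A$: \[ a\to b\le (c\otimes a)\to(c\otimes b)\quad\text{and}\quad (a\otimes b)\to c\le b\to(a\Rightarrow_A c). \] Then there exist a non-commutative spacetime $\mathcal{S}=(\mathscr{X},\nabla)$ and a map $i:A\to\mathscr{X}$ which is a strict monoidal order embedding satisfying $i(a\to b)=i(a)\to_{\mathcal{S}}i(b)$ for all $a,b\in A$.
   Context: A monoidal poset is a poset with a monoid structure whose multiplication is monotone in each argument. An implication on it is a function $\to:A^{op}\times A\to A$ (antitone in the first, monotone in the second argument) with $e\le a\to a$ and $(a\to b)\otimes(b\to c)\le a\to c$; a strong algebra is a monoidal poset with an implication. A quantale is a monoidal poset with all joins whose multiplication distributes over arbitrary joins in each argument. A non-commutative spacetime is $(\mathscr{X},\nabla)$ with $\mathscr{X}$ a quantale and $\nabla$ join preserving and oplax monoidal ($\nabla e\le e$, $\nabla(a\otimes b)\le\nabla a\otimes\nabla b$); its implication $\to_{\mathcal{S}}$ is characterized by $a\otimes\nabla b\le c$ iff $b\le a\to_{\mathcal{S}}c$. A strict monoidal order embedding is a map $i$ with $i(e)=e$, $i(a\otimes b)=i(a)\otimes i(b)$ and $a\le b\iff i(a)\le i(b)$. *)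

theory Defs
  imports Main
begin

text \<open>All structures are given by an explicit carrier set, order relation,
multiplication and unit, so that the (existentially quantified) quantale can
live on a carrier inside a fixed ambient type.\<close>

definition partial_order_on :: "'b set \<Rightarrow> ('b \<Rightarrow> 'b \<Rightarrow> bool) \<Rightarrow> bool" where
  "partial_order_on X le \<longleftrightarrow>
     (\<forall>a\<in>X. le a a) \<and>
     (\<forall>a\<in>X. \<forall>b\<in>X. le a b \<and> le b a \<longrightarrow> a = b) \<and>
     (\<forall>a\<in>X. \<forall>b\<in>X. \<forall>c\<in>X. le a b \<and> le b c \<longrightarrow> le a c)"

definition monoidal_poset ::
  "'b set \<Rightarrow> ('b \<Rightarrow> 'b \<Rightarrow> bool) \<Rightarrow> ('b \<Rightarrow> 'b \<Rightarrow> 'b) \<Rightarrow> 'b \<Rightarrow> bool" where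
  "monoidal_poset X le m e \<longleftrightarrow>
     partial_order_on X le \<and>
     e \<in> X \<and> (\<forall>a\<in>X. \<forall>b\<in>X. m a b \<in> X) \<and>
     (\<forall>a\<in>X. \<forall>b\<in>X. \<forall>c\<in>X. m (m a b) c = m a (m b c)) \<and>
     (\<forall>a\<in>X. m e a = a \<and> m a e = a) \<and>
     (\<forall>a\<in>X. \<forall>a'\<in>X. \<forall>b\<in>X. le a a' \<longrightarrow> le (m a b) (m a' b) \<and> le (m b a) (m b a'))"

definition strong_algebra ::
  "'b set \<Rightarrow> ('b \<Rightarrow> 'b \<Rightarrow> bool) \<Rightarrow> ('b \<Rightarrow> 'b \<Rightarrow> 'b) \<Rightarrow> 'b \<Rightarrow> ('b \<Rightarrow> 'b \<Rightarrow> 'b) \<Rightarrow> bool" where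
  "strong_algebra X le m e imp \<longleftrightarrow>
     monoidal_poset X le m e \<and>
     (\<forall>a\<in>X. \<forall>b\<in>X. imp a b \<in> X) \<and>
     (\<forall>a\<in>X. \<forall>a'\<in>X. \<forall>b\<in>X. le a a' \<longrightarrow> le (imp a' b) (imp a b)) \<and>
     (\<forall>a\<in>X. \<forall>b\<in>X. \<forall>b'\<in>X. le b b' \<longrightarrow> le (imp a b) (imp a b')) \<and>
     (\<forall>a\<in>X. le e (imp a a)) \<and>
     (\<forall>a\<in>X. \<forall>b\<in>X. \<forall>c\<in>X. le (m (imp a b) (imp b c)) (imp a c))"

definition is_join :: "'b set \<Rightarrow> ('b \<Rightarrow> 'b \<Rightarrow> bool) \<Rightarrow> 'b set \<Rightarrow> 'b \<Rightarrow> bool" where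
  "is_join X le S j \<longleftrightarrow> j \<in> X \<and> (\<forall>s\<in>S. le s j) \<and> (\<forall>u\<in>X. (\<forall>s\<in>S. le s u) \<longrightarrow> le j u)"

definition quantale ::
  "'b set \<Rightarrow> ('b \<Rightarrow> 'b \<Rightarrow> bool) \<Rightarrow> ('b \<Rightarrow> 'b \<Rightarrow> 'b) \<Rightarrow> 'b \<Rightarrow> bool" where
  "quantale X le m e \<longleftrightarrow>
     monoidal_poset X le m e \<and>
     (\<forall>S. S \<subseteq> X \<longrightarrow> (\<exists>j. is_join X le S j)) \<and>
     (\<forall>S a j. S \<subseteq> X \<longrightarrow> a \<in> X \<longrightarrow> is_join X le S j \<longrightarrow>
         is_join X le ((\<lambda>s. m a s) ` S) (m a j) \<and> is_join X le ((\<lambda>s. m s a) ` S) (m j a))"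

definition nc_spacetime ::
  "'b set \<Rightarrow> ('b \<Rightarrow> 'b \<Rightarrow> bool) \<Rightarrow> ('b \<Rightarrow> 'b \<Rightarrow> 'b) \<Rightarrow> 'b \<Rightarrow> ('b \<Rightarrow> 'b) \<Rightarrow> bool" where
  "nc_spacetime X le m e nabla \<longleftrightarrow>
     quantale X le m e \<and>
     (\<forall>a\<in>X. nabla a \<in> X) \<and>
     (\<forall>S j. S \<subseteq> X \<longrightarrow> is_join X le S j \<longrightarrow> is_join X le (nabla ` S) (nabla j)) \<and>
     le (nabla e) e \<and>
     (\<forall>a\<in>X. \<forall>b\<in>X. le (nabla (m a b)) (m (nabla a) (nabla b)))"

definition spacetime_imp ::
  "'b set \<Rightarrow> ('b \<Rightarrow> 'b \<Rightarrow> bool) \<Rightarrow> ('b \<Rightarrow> 'b \<Rightarrow> 'b) \<Rightarrow> ('b \<Rightarrow> 'b) \<Rightarrow> 'b \<Rightarrow> 'b \<Rightarrow> 'b" where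
  "spacetime_imp X le m nabla a c =
     (THE z. z \<in> X \<and> (\<forall>b\<in>X. le (m a (nabla b)) c \<longleftrightarrow> le b z))"

end

theory Submission
  imports Defs "HOL-Library.Countable"
begin

datatype 'b tm = Lf 'b | Pr "'b tm" "'b tm" | Nb "'b tm"

instance tm :: (countable) countable by countable_datatype

primrec leaves :: "'b tm \<Rightarrow> 'b list" where
  "leaves (Lf a) = [a]"
| "leaves (Pr s t) = leaves s @ leaves t"
| "leaves (Nb s) = leaves s"

primrec fill :: "unit tm \<Rightarrow> 'b list \<Rightarrow> 'b tm" where
  "fill (Lf u) xs = Lf (hd xs)"
| "fill (Pr s t) xs = Pr (fill s (take (length (leaves s)) xs)) (fill t (drop (length (leaves s)) xs))"
| "fill (Nb s) xs = Nb (fill s xs)"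

lemma leaves_map: "length (leaves (map_tm f t)) = length (leaves t)"
  by (induct t) auto

lemma fill_shape: "fill (map_tm (\<lambda>_. ()) t) (leaves t) = t"
  by (induct t) (auto simp: leaves_map)

definition dec :: "'b list \<Rightarrow> 'b tm" where
  "dec w = fill (from_nat (fst (prod_decode (length w)))) (take (snd (prod_decode (length w))) w)"

lemma dec_surj: "\<exists>w. dec w = t"
proof -
  define n where "n = to_nat (map_tm (\<lambda>_. ()) t)"
  define k where "k = length (leaves t)"
  define w where "w = leaves t @ replicate (prod_encode (n, k) - k) undefined"
  have "k \<le> prod_encode (n, k)" by (rule le_prod_encode_2)
  then have "length w = prod_encode (n, k)" unfolding w_def k_def by simp
  then have "dec w = fill (map_tm (\<lambda>_. ()) t) (leaves t)"
    unfolding dec_def n_def k_def w_def by simp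
  then show ?thesis using fill_shape by metis
qed

definition up :: "('a \<Rightarrow> 'a \<Rightarrow> bool) \<Rightarrow> 'a \<Rightarrow> 'a set" where
  "up le a = {x. le a x}"
definition mul :: "('a \<Rightarrow> 'a \<Rightarrow> bool) \<Rightarrow> ('a \<Rightarrow> 'a \<Rightarrow> 'a) \<Rightarrow> 'a set \<Rightarrow> 'a set \<Rightarrow> 'a set" where
  "mul le m S T = {x. \<exists>s\<in>S. \<exists>t\<in>T. le (m s t) x}"
definition nb :: "'a \<Rightarrow> ('a \<Rightarrow> 'a \<Rightarrow> 'a) \<Rightarrow> 'a set \<Rightarrow> 'a set" where
  "nb e imp S = {t. imp e t \<in> S}"

primrec sem :: "('a \<Rightarrow> 'a \<Rightarrow> bool) \<Rightarrow> ('a \<Rightarrow> 'a \<Rightarrow> 'a) \<Rightarrow> 'a \<Rightarrow> ('a \<Rightarrow> 'a \<Rightarrow> 'a) \<Rightarrow> 'a tm \<Rightarrow> 'a set" where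
  "sem le m e imp (Lf a) = up le a"
| "sem le m e imp (Pr s t) = mul le m (sem le m e imp s) (sem le m e imp t)"
| "sem le m e imp (Nb s) = nb e imp (sem le m e imp s)"

lemma sem_upset:
  assumes trans: "\<And>a b c. le a b \<Longrightarrow> le b c \<Longrightarrow> le a c"
    and impM: "\<And>a b b'. le b b' \<Longrightarrow> le (imp a b) (imp a b')"
  shows "x \<in> sem le m e imp t \<Longrightarrow> le x y \<Longrightarrow> y \<in> sem le m e imp t"
proof (induct t arbitrary: x y)
  case (Lf a) then show ?case using trans by (auto simp: up_def)
next
  case (Pr p q) then show ?case unfolding sem.simps mul_def using trans by blast
next
  case (Nb p) then show ?case using impM by (auto simp: nb_def)
qed

theorem theorem6p2:
  fixes le :: "'a \<Rightarrow> 'a \<Rightarrow> bool" and m :: "'a \<Rightarrow> 'a \<Rightarrow> 'a" and e :: 'a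
    and imp :: "'a \<Rightarrow> 'a \<Rightarrow> 'a" and res :: "'a \<Rightarrow> 'a \<Rightarrow> 'a"
  assumes strong: "strong_algebra UNIV le m e imp"
    and residual: "\<And>a b c. le (m a b) c \<longleftrightarrow> le b (res a c)"
    and int1: "\<And>a b c. le (imp a b) (imp (m c a) (m c b))"
    and int2: "\<And>a b c. le (imp (m a b) c) (imp b (res a c))"
  shows "\<exists>(X :: 'a list set set) leX mX eX nabla (i :: 'a \<Rightarrow> 'a list set).
           nc_spacetime X leX mX eX nabla \<and>
           (\<forall>a. i a \<in> X) \<and>
           i e = eX \<and>
           (\<forall>a b. i (m a b) = mX (i a) (i b)) \<and>
           (\<forall>a b. le a b \<longleftrightarrow> leX (i a) (i b)) \<and>
           (\<forall>a b. i (imp a b) = spacetime_imp X leX mX nabla (i a) (i b))"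
proof -
  note all = strong[unfolded strong_algebra_def monoidal_poset_def partial_order_on_def]
  have sd: "(\<forall>a\<in>UNIV. le a a) \<and>
     (\<forall>a\<in>UNIV. \<forall>b\<in>UNIV. le a b \<and> le b a \<longrightarrow> a = b) \<and>
     (\<forall>a\<in>UNIV. \<forall>b\<in>UNIV. \<forall>c\<in>UNIV. le a b \<and> le b c \<longrightarrow> le a c)"
    using conjunct1[OF conjunct1[OF all]] .
  have sm: "(\<forall>a\<in>UNIV. \<forall>b\<in>UNIV. \<forall>c\<in>UNIV. m (m a b) c = m a (m b c)) \<and>
     (\<forall>a\<in>UNIV. m e a = a \<and> m a e = a) \<and>
     (\<forall>a\<in>UNIV. \<forall>a'\<in>UNIV. \<forall>b\<in>UNIV. le a a' \<longrightarrow> le (m a b) (m a' b) \<and> le (m b a) (m b a'))"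
    using conjunct2[OF conjunct2[OF conjunct2[OF conjunct1[OF all]]]] .
  have si: "(\<forall>a\<in>UNIV. \<forall>a'\<in>UNIV. \<forall>b\<in>UNIV. le a a' \<longrightarrow> le (imp a' b) (imp a b)) \<and>
     (\<forall>a\<in>UNIV. \<forall>b\<in>UNIV. \<forall>b'\<in>UNIV. le b b' \<longrightarrow> le (imp a b) (imp a b')) \<and>
     (\<forall>a\<in>UNIV. le e (imp a a)) \<and>
     (\<forall>a\<in>UNIV. \<forall>b\<in>UNIV. \<forall>c\<in>UNIV. le (m (imp a b) (imp b c)) (imp a c))"
    using conjunct2[OF conjunct2[OF all]] .
  have refl: "\<And>a. le a a" using conjunct1[OF sd] by blast
  have antis: "\<And>a b. le a b \<Longrightarrow> le b a \<Longrightarrow> a = b" using conjunct1[OF conjunct2[OF sd]] by blast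
  have trans: "\<And>a b c. le a b \<Longrightarrow> le b c \<Longrightarrow> le a c" using conjunct2[OF conjunct2[OF sd]] by blast
  have assoc: "\<And>a b c. m (m a b) c = m a (m b c)" using conjunct1[OF sm] by blast
  have unitl: "\<And>a. m e a = a" using conjunct1[OF conjunct2[OF sm]] by blast
  have unitr: "\<And>a. m a e = a" using conjunct1[OF conjunct2[OF sm]] by blast
  have monoL: "\<And>a a' b. le a a' \<Longrightarrow> le (m a b) (m a' b)" using conjunct2[OF conjunct2[OF sm]] by blast
  have monoR: "\<And>a a' b. le a a' \<Longrightarrow> le (m b a) (m b a')" using conjunct2[OF conjunct2[OF sm]] by blast
  have impA: "\<And>a a' b. le a a' \<Longrightarrow> le (imp a' b) (imp a b)" using conjunct1[OF si] by blast
  have impM: "\<And>a b b'. le b b' \<Longrightarrow> le (imp a b) (imp a b')" using conjunct1[OF conjunct2[OF si]] by blast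
  have idimp: "\<And>a. le e (imp a a)" using conjunct1[OF conjunct2[OF conjunct2[OF si]]] by blast
  have comp: "\<And>a b c. le (m (imp a b) (imp b c)) (imp a c)" using conjunct2[OF conjunct2[OF conjunct2[OF si]]] by blast
  define S where "S r = sem le m e imp (dec r)" for r :: "'a list"
  have ups: "\<And>r x y. x \<in> S r \<Longrightarrow> le x y \<Longrightarrow> y \<in> S r"
    unfolding S_def by (rule sem_upset[where le=le and imp=imp, OF trans impM])
  have s_up: "\<And>a. \<exists>r. S r = up le a"
  proof -
    fix a obtain w :: "'a list" where "dec w = Lf a" using dec_surj by blast
    then have "S w = up le a" unfolding S_def by simp
    then show "\<exists>r. S r = up le a" by blast
  qed
  have s_mul: "\<And>u v. \<exists>r. S r = mul le m (S u) (S v)"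
  proof -
    fix u v obtain w :: "'a list" where "dec w = Pr (dec u) (dec v)" using dec_surj by blast
    then have "S w = mul le m (S u) (S v)" unfolding S_def by simp
    then show "\<exists>r. S r = mul le m (S u) (S v)" by blast
  qed
  have s_nb: "\<And>u. \<exists>r. S r = nb e imp (S u)"
  proof -
    fix u obtain w :: "'a list" where "dec w = Nb (dec u)" using dec_surj by blast
    then have "S w = nb e imp (S u)" unfolding S_def by simp
    then show "\<exists>r. S r = nb e imp (S u)" by blast
  qed
  have mul_mono: "\<And>A A' B B'. A \<subseteq> A' \<Longrightarrow> B \<subseteq> B' \<Longrightarrow> mul le m A B \<subseteq> mul le m A' B'"
    unfolding mul_def by blast
  have mul_assoc: "\<And>u v w. mul le m (mul le m (S u) (S v)) (S w) = mul le m (S u) (mul le m (S v) (S w))"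
  proof -
    fix u v w
    show "mul le m (mul le m (S u) (S v)) (S w) = mul le m (S u) (mul le m (S v) (S w))"
    proof (rule set_eqI, rule iffI)
      fix x assume "x \<in> mul le m (mul le m (S u) (S v)) (S w)"
      then obtain p s t r where "s \<in> S u" "t \<in> S v" "le (m s t) p" "r \<in> S w" "le (m p r) x"
        unfolding mul_def by blast
      moreover have "le (m (m s t) r) (m p r)" using monoL calculation by blast
      ultimately have "le (m s (m t r)) x" using trans assoc by metis
      moreover have "m t r \<in> mul le m (S v) (S w)" unfolding mul_def using refl \<open>t \<in> S v\<close> \<open>r \<in> S w\<close> by blast
      ultimately show "x \<in> mul le m (S u) (mul le m (S v) (S w))"
        unfolding mul_def using \<open>s \<in> S u\<close> by blast
    next
      fix x assume "x \<in> mul le m (S u) (mul le m (S v) (S w))"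
      then obtain p s t r where "s \<in> S u" "t \<in> S v" "le (m t r) p" "r \<in> S w" "le (m s p) x"
        unfolding mul_def by blast
      moreover have "le (m s (m t r)) (m s p)" using monoR calculation by blast
      ultimately have "le (m (m s t) r) x" using trans assoc by metis
      moreover have "m s t \<in> mul le m (S u) (S v)" unfolding mul_def using refl \<open>t \<in> S v\<close> \<open>s \<in> S u\<close> by blast
      ultimately show "x \<in> mul le m (mul le m (S u) (S v)) (S w)"
        unfolding mul_def using \<open>r \<in> S w\<close> by blast
    qed
  qed
  have nb_mono: "\<And>A B. A \<subseteq> B \<Longrightarrow> nb e imp A \<subseteq> nb e imp B"
    unfolding nb_def by blast
  have phi_mul: "\<And>s t. le (m (imp e s) (imp e t)) (imp e (m s t))"
  proof -
    fix s t
    have "le (imp e t) (imp s (m s t))" using int1[of e t s] unitr by simp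
    then have "le (m (imp e s) (imp e t)) (m (imp e s) (imp s (m s t)))" by (rule monoR)
    then show "le (m (imp e s) (imp e t)) (imp e (m s t))" using comp trans by blast
  qed
  have nb_mul: "\<And>u v. mul le m (nb e imp (S u)) (nb e imp (S v)) \<subseteq> nb e imp (mul le m (S u) (S v))"
  proof
    fix u v x assume "x \<in> mul le m (nb e imp (S u)) (nb e imp (S v))"
    then obtain s t where st: "imp e s \<in> S u" "imp e t \<in> S v" "le (m s t) x"
      unfolding mul_def nb_def by blast
    have "le (m (imp e s) (imp e t)) (imp e x)" using phi_mul impM st(3) trans by blast
    then show "x \<in> nb e imp (mul le m (S u) (S v))" using st unfolding mul_def nb_def by blast
  qed
  have resl: "\<And>a b. le (m a (res a b)) b" using residual refl by blast
  have key1: "\<And>a b. le (imp a b) (imp e (res a b))" using int2[of _ e] unitr by simp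
  have key2: "\<And>a b. le (imp e (res a b)) (imp a b)"
  proof -
    fix a b
    have "le (imp e (res a b)) (imp a (m a (res a b)))" using int1[of e "res a b" a] unitr by simp
    then show "le (imp e (res a b)) (imp a b)" using impM resl trans by blast
  qed
  define X :: "'a list set set" where "X = {U. \<forall>r\<in>U. \<forall>r'. S r \<subseteq> S r' \<longrightarrow> r' \<in> U}"
  define mX where "mX U V = {r. \<exists>u\<in>U. \<exists>v\<in>V. mul le m (S u) (S v) \<subseteq> S r}" for U V :: "'a list set"
  define eX where "eX = {r. e \<in> S r}"
  define nabla where "nabla U = {r. \<exists>u\<in>U. nb e imp (S u) \<subseteq> S r}" for U :: "'a list set"
  define i where "i a = {r. a \<in> S r}" for a
  have iX: "\<And>a. i a \<in> X" unfolding i_def X_def by blast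
  have mXX: "\<And>U V. mX U V \<in> X" unfolding mX_def X_def by blast
  have nX: "\<And>U. nabla U \<in> X" unfolding nabla_def X_def by blast
  have eXX: "eX \<in> X" unfolding eX_def X_def by blast
  have massoc: "\<And>U V W. mX (mX U V) W = mX U (mX V W)"
  proof (rule set_eqI, rule iffI)
    fix U V W r assume "r \<in> mX (mX U V) W"
    then obtain s w u v where "u \<in> U" "v \<in> V" "mul le m (S u) (S v) \<subseteq> S s" "w \<in> W"
       "mul le m (S s) (S w) \<subseteq> S r" unfolding mX_def by blast
    moreover obtain t where t: "S t = mul le m (S v) (S w)" using s_mul by blast
    ultimately have "t \<in> mX V W" "mul le m (S u) (S t) \<subseteq> S r"
      unfolding mX_def using mul_mono[of "mul le m (S u) (S v)" "S s" "S w" "S w"] mul_assoc[of u v w]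
      by auto
    then show "r \<in> mX U (mX V W)" unfolding mX_def using \<open>u \<in> U\<close> by blast
  next
    fix U V W r assume "r \<in> mX U (mX V W)"
    then obtain s w u v where "u \<in> U" "v \<in> V" "mul le m (S v) (S w) \<subseteq> S s" "w \<in> W"
       "mul le m (S u) (S s) \<subseteq> S r" unfolding mX_def by blast
    moreover obtain t where t: "S t = mul le m (S u) (S v)" using s_mul by blast
    ultimately have "t \<in> mX U V" "mul le m (S t) (S w) \<subseteq> S r"
      unfolding mX_def using mul_mono[of "S u" "S u" "mul le m (S v) (S w)" "S s"] mul_assoc[of u v w]
      by auto
    then show "r \<in> mX (mX U V) W" unfolding mX_def using \<open>w \<in> W\<close> by blast
  qed
  obtain re where re: "S re = up le e" using s_up by blast
  have munitl: "\<And>U. U \<in> X \<Longrightarrow> mX eX U = U"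
  proof (rule set_eqI, rule iffI)
    fix U r assume U: "U \<in> X" and "r \<in> mX eX U"
    then obtain u0 u where "e \<in> S u0" "u \<in> U" "mul le m (S u0) (S u) \<subseteq> S r"
      unfolding mX_def eX_def by blast
    moreover have "S u \<subseteq> mul le m (S u0) (S u)"
    proof
      fix x assume "x \<in> S u"
      have "le (m e x) x" using unitl refl by simp
      then show "x \<in> mul le m (S u0) (S u)" unfolding mul_def using \<open>x \<in> S u\<close> \<open>e \<in> S u0\<close> by blast
    qed
    ultimately show "r \<in> U" using U unfolding X_def by blast
  next
    fix U r assume U: "U \<in> X" and "r \<in> U"
    have "mul le m (S re) (S r) \<subseteq> S r"
    proof
      fix x assume "x \<in> mul le m (S re) (S r)"
      then obtain s t where st: "le e s" "t \<in> S r" "le (m s t) x" unfolding re mul_def up_def by blast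
      have "le (m e t) (m s t)" using monoL st(1) by blast
      then have "le t x" using unitl trans st(3) by metis
      then show "x \<in> S r" using ups st(2) by blast
    qed
    moreover have "re \<in> eX" unfolding eX_def using re refl unfolding up_def by simp
    ultimately show "r \<in> mX eX U" unfolding mX_def using \<open>r \<in> U\<close> by blast
  qed
  have munitr: "\<And>U. U \<in> X \<Longrightarrow> mX U eX = U"
  proof (rule set_eqI, rule iffI)
    fix U r assume U: "U \<in> X" and "r \<in> mX U eX"
    then obtain u0 u where "e \<in> S u0" "u \<in> U" "mul le m (S u) (S u0) \<subseteq> S r"
      unfolding mX_def eX_def by blast
    moreover have "S u \<subseteq> mul le m (S u) (S u0)"
    proof
      fix x assume "x \<in> S u"
      have "le (m x e) x" using unitr refl by simp
      then show "x \<in> mul le m (S u) (S u0)" unfolding mul_def using \<open>x \<in> S u\<close> \<open>e \<in> S u0\<close> by blast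
    qed
    ultimately show "r \<in> U" using U unfolding X_def by blast
  next
    fix U r assume U: "U \<in> X" and "r \<in> U"
    have "mul le m (S r) (S re) \<subseteq> S r"
    proof
      fix x assume "x \<in> mul le m (S r) (S re)"
      then obtain s t where st: "le e s" "t \<in> S r" "le (m t s) x" unfolding re mul_def up_def by blast
      have "le (m t e) (m t s)" using monoR st(1) by blast
      then have "le t x" using unitr trans st(3) by metis
      then show "x \<in> S r" using ups st(2) by blast
    qed
    moreover have "re \<in> eX" unfolding eX_def using re refl unfolding up_def by simp
    ultimately show "r \<in> mX U eX" unfolding mX_def using \<open>r \<in> U\<close> by blast
  qed
  have mmono1: "\<And>A A' B. A \<subseteq> A' \<Longrightarrow> mX A B \<subseteq> mX A' B"
    unfolding mX_def by blast
  have mmono2: "\<And>A A' B. A \<subseteq> A' \<Longrightarrow> mX B A \<subseteq> mX B A'"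
    unfolding mX_def by blast
  have joinU: "\<And>T. T \<subseteq> X \<Longrightarrow> is_join X (\<subseteq>) T (\<Union>T)"
    unfolding is_join_def X_def by blast
  have joinE: "\<And>T j. T \<subseteq> X \<Longrightarrow> is_join X (\<subseteq>) T j \<Longrightarrow> j = \<Union>T"
  proof -
    fix T j assume T: "T \<subseteq> X" and j: "is_join X (\<subseteq>) T j"
    have "\<Union>T \<in> X" using joinU[OF T] unfolding is_join_def by blast
    then have "j \<subseteq> \<Union>T" using j unfolding is_join_def by blast
    moreover have "\<Union>T \<subseteq> j" using j unfolding is_join_def by blast
    ultimately show "j = \<Union>T" by blast
  qed
  have mXun1: "\<And>a T. mX a (\<Union>T) = \<Union>((\<lambda>s. mX a s) ` T)" unfolding mX_def by blast
  have mXun2: "\<And>a T. mX (\<Union>T) a = \<Union>((\<lambda>s. mX s a) ` T)" unfolding mX_def by blast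
  have nun: "\<And>T. nabla (\<Union>T) = \<Union>(nabla ` T)" unfolding nabla_def by blast
  have po: "partial_order_on X (\<subseteq>)" unfolding partial_order_on_def by blast
  have mp: "monoidal_poset X (\<subseteq>) mX eX"
    unfolding monoidal_poset_def
    by (intro conjI ballI impI; (rule po eXX mXX massoc munitl munitr mmono1 mmono2; assumption))
  have joinex: "\<forall>T. T \<subseteq> X \<longrightarrow> (\<exists>j. is_join X (\<subseteq>) T j)" using joinU by blast
  have quant: "quantale X (\<subseteq>) mX eX"
    unfolding quantale_def
  proof (intro conjI mp joinex allI impI)
    fix T a j assume T: "T \<subseteq> X" and a: "a \<in> X" and j: "is_join X (\<subseteq>) T j"
    have "j = \<Union>T" using joinE T j by blast
    moreover have "(\<lambda>s. mX a s) ` T \<subseteq> X" "(\<lambda>s. mX s a) ` T \<subseteq> X" using mXX by auto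
    ultimately show "is_join X (\<subseteq>) ((\<lambda>s. mX a s) ` T) (mX a j)"
      "is_join X (\<subseteq>) ((\<lambda>s. mX s a) ` T) (mX j a)"
      using joinU mXun1 mXun2 by metis+
  qed
  have neX: "nabla eX \<subseteq> eX"
  proof
    fix r assume "r \<in> nabla eX"
    then obtain u where "e \<in> S u" "nb e imp (S u) \<subseteq> S r" unfolding nabla_def eX_def by blast
    moreover have "e \<in> nb e imp (S u)" unfolding nb_def using calculation(1) idimp ups by blast
    ultimately show "r \<in> eX" unfolding eX_def by blast
  qed
  have nmul: "\<And>U V. nabla (mX U V) \<subseteq> mX (nabla U) (nabla V)"
  proof
    fix U V r assume "r \<in> nabla (mX U V)"
    then obtain s u v where "u \<in> U" "v \<in> V" "mul le m (S u) (S v) \<subseteq> S s" "nb e imp (S s) \<subseteq> S r"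
      unfolding nabla_def mX_def by blast
    moreover obtain u' where u': "S u' = nb e imp (S u)" using s_nb by blast
    moreover obtain v' where v': "S v' = nb e imp (S v)" using s_nb by blast
    ultimately have "u' \<in> nabla U" "v' \<in> nabla V" unfolding nabla_def by auto
    have "mul le m (S u') (S v') \<subseteq> nb e imp (mul le m (S u) (S v))" unfolding u' v' by (rule nb_mul)
    also have "\<dots> \<subseteq> nb e imp (S s)" by (rule nb_mono) fact
    also have "\<dots> \<subseteq> S r" by fact
    finally have "mul le m (S u') (S v') \<subseteq> S r" .
    then show "r \<in> mX (nabla U) (nabla V)" unfolding mX_def using \<open>u' \<in> nabla U\<close> \<open>v' \<in> nabla V\<close> by blast
  qed
  have nj: "\<forall>T j. T \<subseteq> X \<longrightarrow> is_join X (\<subseteq>) T j \<longrightarrow> is_join X (\<subseteq>) (nabla ` T) (nabla j)"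
  proof (intro allI impI)
    fix T j assume T: "T \<subseteq> X" and j: "is_join X (\<subseteq>) T j"
    have "j = \<Union>T" using joinE T j by blast
    moreover have "nabla ` T \<subseteq> X" using nX by auto
    ultimately show "is_join X (\<subseteq>) (nabla ` T) (nabla j)" using joinU nun by metis
  qed
  have nX': "\<forall>a\<in>X. nabla a \<in> X" using nX by blast
  have nmul': "\<forall>a\<in>X. \<forall>b\<in>X. nabla (mX a b) \<subseteq> mX (nabla a) (nabla b)" using nmul by blast
  have nc: "nc_spacetime X (\<subseteq>) mX eX nabla"
    unfolding nc_spacetime_def using quant nX' nj neX nmul' by (intro conjI)
  have imul: "\<And>a b. i (m a b) = mX (i a) (i b)"
  proof (rule set_eqI, rule iffI)
    fix a b r assume "r \<in> i (m a b)"
    obtain u where u: "S u = up le a" using s_up by blast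
    obtain v where v: "S v = up le b" using s_up by blast
    have "mul le m (S u) (S v) \<subseteq> S r" unfolding u v mul_def up_def
      using \<open>r \<in> i (m a b)\<close> unfolding i_def
      by (smt (verit) monoL monoR trans ups mem_Collect_eq subsetI)
    moreover have "u \<in> i a" "v \<in> i b" using u v refl unfolding i_def up_def by auto
    ultimately show "r \<in> mX (i a) (i b)" unfolding mX_def by blast
  next
    fix a b r assume "r \<in> mX (i a) (i b)"
    then obtain u v where "a \<in> S u" "b \<in> S v" "mul le m (S u) (S v) \<subseteq> S r"
      unfolding mX_def i_def by blast
    then show "r \<in> i (m a b)" unfolding i_def mul_def using refl by blast
  qed
  have ile: "\<And>a b. le a b \<longleftrightarrow> i a \<subseteq> i b"
  proof
    fix a b assume "le a b" then show "i a \<subseteq> i b" unfolding i_def using ups by blast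
  next
    fix a b assume ab: "i a \<subseteq> i b"
    obtain u where u: "S u = up le a" using s_up by blast
    have "u \<in> i a" using u refl unfolding i_def up_def by simp
    then have "b \<in> S u" using ab unfolding i_def by blast
    then show "le a b" using u unfolding up_def by simp
  qed
  have galois: "\<And>a b x. mX (i a) (nabla x) \<subseteq> i b \<longleftrightarrow> x \<subseteq> i (imp a b)"
  proof
    fix a b x assume H: "mX (i a) (nabla x) \<subseteq> i b"
    show "x \<subseteq> i (imp a b)"
    proof
      fix w assume w: "w \<in> x"
      obtain u where u: "S u = up le a" using s_up by blast
      obtain v where v: "S v = nb e imp (S w)" using s_nb by blast
      obtain r where r: "S r = mul le m (S u) (S v)" using s_mul by blast
      have "u \<in> i a" using u refl unfolding i_def up_def by simp
      moreover have "v \<in> nabla x" unfolding nabla_def using w v by blast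
      ultimately have "r \<in> mX (i a) (nabla x)" unfolding mX_def using r by blast
      then have "b \<in> S r" using H unfolding i_def by blast
      then obtain a' t where "le a a'" "imp e t \<in> S w" "le (m a' t) b"
        unfolding r u v mul_def up_def nb_def by blast
      then have "le t (res a b)" using residual monoL trans by blast
      then have "imp e (res a b) \<in> S w" using impM ups \<open>imp e t \<in> S w\<close> by blast
      then show "w \<in> i (imp a b)" unfolding i_def using key2 ups by blast
    qed
  next
    fix a b x assume H: "x \<subseteq> i (imp a b)"
    show "mX (i a) (nabla x) \<subseteq> i b"
    proof
      fix r assume "r \<in> mX (i a) (nabla x)"
      then obtain u v w where "a \<in> S u" "w \<in> x" "nb e imp (S w) \<subseteq> S v" "mul le m (S u) (S v) \<subseteq> S r"
        unfolding mX_def i_def nabla_def by blast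
      moreover have "imp a b \<in> S w" using H calculation(2) unfolding i_def by blast
      then have "imp e (res a b) \<in> S w" using key1 ups by blast
      then have "res a b \<in> S v" using calculation(3) unfolding nb_def by blast
      ultimately have "b \<in> mul le m (S u) (S v)" unfolding mul_def using resl by blast
      then show "r \<in> i b" unfolding i_def using \<open>mul le m (S u) (S v) \<subseteq> S r\<close> by blast
    qed
  qed
  have iimp: "\<And>a b. i (imp a b) = spacetime_imp X (\<subseteq>) mX nabla (i a) (i b)"
  proof -
    fix a b
    have P: "i (imp a b) \<in> X \<and> (\<forall>x\<in>X. mX (i a) (nabla x) \<subseteq> i b \<longleftrightarrow> x \<subseteq> i (imp a b))"
      using iX galois by blast
    show "i (imp a b) = spacetime_imp X (\<subseteq>) mX nabla (i a) (i b)"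
      unfolding spacetime_imp_def
    proof (rule the_equality[symmetric], rule P)
      fix z assume z: "z \<in> X \<and> (\<forall>x\<in>X. mX (i a) (nabla x) \<subseteq> i b \<longleftrightarrow> x \<subseteq> z)"
      show "z = i (imp a b)" using z P by blast
    qed
  qed
  have ie: "i e = eX" unfolding i_def eX_def by simp
  have "nc_spacetime X (\<subseteq>) mX eX nabla \<and> (\<forall>a. i a \<in> X) \<and> i e = eX \<and>
        (\<forall>a b. i (m a b) = mX (i a) (i b)) \<and> (\<forall>a b. le a b \<longleftrightarrow> i a \<subseteq> i b) \<and>
        (\<forall>a b. i (imp a b) = spacetime_imp X (\<subseteq>) mX nabla (i a) (i b))"
    using nc iX ie imul ile iimp by blast
  then show ?thesis by (intro exI)
qed

end
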